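(* Let $\bm F\in\mathbb{C}^{N\times N}$ be an invertible Hermitian matrix with spectral decomposition $\bm F=\sum_{i=1}^N\lambda_i\bm v_i\bm v_i^\dagger$ ($\{\bm v_i\}$ orthonormal), spectral norm $s=\|\bm F\|_*=\max_i|\lambda_i|$ and condition number $\kappa$, so that $s/\kappa\le|\lambda_i|\le s$ for all $i$. Let $\gamma>0$, $0<\epsilon\le 1$, and $h(\lambda)=\frac{\sqrt{\gamma}\lambda}{\lambda^2+\gamma}$. Let $\bm y=\sum_i\beta_i\bm v_i\in\mathbb{C}^N$ be a unit vector, and let $\overline{\lambda_1},\dots,\overline{\lambda_N}\in\mathbb{R}$ satisfy $|\overline{\lambda_i}-\lambda_i|\le \frac{s}{4\kappa}\epsilon$ for all $i$. Define $$\bm w=\frac{\sum_i\beta_i h(\overline{\lambda_i})\bm v_i}{\big\|\sum_i\beta_i h(\overline{\lambda_i})\bm v_i\big\|},\qquad \bm w^*=\frac{\sum_i\beta_i h(\lambda_i)\bm v_i}{\big\|\sum_i\beta_i h(\lambda_i)\bm v_i\big\|}.$$ Then both are well defined, $\bm w^*$ is the unit vector proportional to $(\bm F^\dagger\bm F+\gamma\bm I_N)^{-1}\bm F^\dagger\bm y$, and $\|\bm w-\bm w^*\|\le\epsilon$.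
   Context: This is the correctness part of the paper's main theorem (Theorem 2): $\bm w$ is the (normalized) output of the algorithm after post-selection, using eigenvalue estimates $\overline{\lambda_i}$, and $\bm w^*$ is the normalized optimal fit parameter of the regularized least squares problem $\min_{\bm w}\|\bm F\bm w-\bm y\|^2+\gamma\|\bm w\|^2$. Norms are Euclidean. *)

theory Defs
  imports "HOL-Analysis.Analysis"
begin

text \<open>Complex vectors in C^N are modelled as complex^'n for a finite index type 'n
  (N = CARD('n)); the norm on complex^'n is the Euclidean norm.\<close>

definition cinner :: "complex^'n \<Rightarrow> complex^'n \<Rightarrow> complex" where
  "cinner x y = (\<Sum>i\<in>UNIV. cnj (x $ i) * y $ i)"

definition ctranspose :: "complex^'n^'m \<Rightarrow> complex^'m^'n" where
  "ctranspose A = (\<chi> i j. cnj (A $ j $ i))"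

definition outer :: "complex^'n \<Rightarrow> complex^'n \<Rightarrow> complex^'n^'n" where
  "outer x y = (\<chi> a b. x $ a * cnj (y $ b))"

definition orthonormal_family :: "('n \<Rightarrow> complex^'n) \<Rightarrow> bool" where
  "orthonormal_family v \<longleftrightarrow> (\<forall>i j. cinner (v i) (v j) = (if i = j then 1 else 0))"

definition hfun :: "real \<Rightarrow> real \<Rightarrow> real" where
  "hfun g x = sqrt g * x / (x\<^sup>2 + g)"

end

theory Submission
  imports Defs
begin


definition Vm :: "('n \<Rightarrow> complex^'n) \<Rightarrow> complex^'n^'n" where
  "Vm v = (\<chi> a b. v b $ a)"
definition Dg :: "('n \<Rightarrow> complex) \<Rightarrow> complex^'n^'n" where
  "Dg d = (\<chi> i j. if i = j then d i else 0)"

lemma VV1: assumes "orthonormal_family v" shows "ctranspose (Vm v) ** Vm v = mat 1"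
  using assms unfolding orthonormal_family_def cinner_def
  by (simp add: vec_eq_iff matrix_matrix_mult_def ctranspose_def Vm_def mat_def)

lemma VV2: assumes "orthonormal_family v" shows "Vm v ** ctranspose (Vm v) = mat 1"
  using VV1[OF assms] matrix_left_right_inverse by blast

lemma sum_Vm: "(\<Sum>i\<in>UNIV. c i *s v i) = Vm v *v (\<chi> i. c i)"
  by (simp add: vec_eq_iff matrix_vector_mult_def Vm_def mult.commute)

lemma ct_mult: "ctranspose (A ** B) = ctranspose B ** ctranspose A"
  by (simp add: vec_eq_iff matrix_matrix_mult_def ctranspose_def mult.commute)

lemma ct_ct: "ctranspose (ctranspose A) = A"
  by (simp add: vec_eq_iff ctranspose_def)

lemma ct_Dg: "ctranspose (Dg d) = Dg (\<lambda>i. cnj (d i))"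
  by (simp add: vec_eq_iff ctranspose_def Dg_def)

lemma Dg_mult: "Dg d ** Dg e = Dg (\<lambda>i. d i * e i)"
proof -
  have "\<And>i j. (\<Sum>k\<in>UNIV. (if i = k then d i else 0) * (if k = j then e k else 0)) = (if i = j then d i * e i else 0)"
  proof -
    fix i j
    have "(\<Sum>k\<in>UNIV. (if i = k then d i else 0) * (if k = j then e k else 0)) = (\<Sum>k\<in>UNIV. if i = k then d i * (if k = j then e k else 0) else 0)"
      by (rule sum.cong) auto
    also have "\<dots> = d i * (if i = j then e i else 0)" by (simp only: sum.delta' finite UNIV_I if_True)
    finally show "?thesis i j" by simp
  qed
  then show ?thesis unfolding Dg_def matrix_matrix_mult_def by (simp add: vec_eq_iff)
qed

lemma Dg_add: "Dg d + Dg e = Dg (\<lambda>i. d i + e i)"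
  by (simp add: vec_eq_iff Dg_def)

lemma Dg_vec: "Dg d *v x = (\<chi> i. d i * x $ i)"
  by (simp add: vec_eq_iff matrix_vector_mult_def Dg_def if_distrib if_distribR cong del: if_weak_cong)

lemma Dg_1: "Dg (\<lambda>i. 1) = mat 1"
  by (simp add: vec_eq_iff Dg_def mat_def)

lemma cinner_adj: "cinner (A *v x) y = cinner x (ctranspose A *v y)"
proof -
  have "cinner (A *v x) y = (\<Sum>i\<in>UNIV. \<Sum>j\<in>UNIV. cnj (A$i$j) * cnj (x$j) * y$i)"
    unfolding cinner_def matrix_vector_mult_def by (simp add: sum_distrib_right)
  also have "\<dots> = (\<Sum>j\<in>UNIV. \<Sum>i\<in>UNIV. cnj (A$i$j) * cnj (x$j) * y$i)"
    by (rule sum.swap)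
  also have "\<dots> = cinner x (ctranspose A *v y)"
    unfolding cinner_def matrix_vector_mult_def ctranspose_def
    by (simp add: sum_distrib_left mult_ac)
  finally show ?thesis .
qed

lemma norm_cinner: "complex_of_real ((norm x)\<^sup>2) = cinner x (x::complex^'n)"
proof -
  have h: "(norm x)\<^sup>2 = (\<Sum>i\<in>UNIV. (norm (x$i))\<^sup>2)"
    by (simp add: norm_vec_def L2_set_def sum_nonneg)
  have "complex_of_real ((norm x)\<^sup>2) = (\<Sum>i\<in>UNIV. complex_of_real ((norm (x$i))\<^sup>2))"
    by (simp only: h of_real_sum)
  also have "\<dots> = (\<Sum>i\<in>UNIV. cnj (x$i) * x$i)"
    by (intro sum.cong refl) (subst complex_norm_square, rule mult.commute)
  finally show ?thesis unfolding cinner_def .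
qed

lemma norm_Vm: assumes "orthonormal_family v" shows "norm (Vm v *v x) = norm x"
proof -
  have e: "ctranspose (Vm v) *v (Vm v *v x) = x"
    by (simp only: matrix_vector_mul_assoc VV1[OF assms] matrix_vector_mul_lid)
  have "complex_of_real ((norm (Vm v *v x))\<^sup>2) = cinner (Vm v *v x) (Vm v *v x)" by (rule norm_cinner)
  also have "\<dots> = cinner x (ctranspose (Vm v) *v (Vm v *v x))" by (rule cinner_adj)
  also have "\<dots> = complex_of_real ((norm x)\<^sup>2)" by (simp only: e norm_cinner)
  finally have "(norm (Vm v *v x))\<^sup>2 = (norm x)\<^sup>2" by (simp only: of_real_eq_iff)
  then show ?thesis by (rule power2_eq_imp_eq[OF _ norm_ge_zero norm_ge_zero])
qed


lemma hdiff: assumes "l \<noteq> 0" "lb\<^sup>2 + g > 0" "l\<^sup>2 + g > 0"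
  shows "hfun g lb - hfun g l = sqrt g * (lb - l) * (g - l * lb) / ((lb\<^sup>2 + g) * (l\<^sup>2 + g))"
  using assms unfolding hfun_def by (simp add: field_simps) (simp add: power2_eq_square algebra_simps)

lemma aux1: fixes l lb :: real
  assumes "l \<noteq> 0" "\<bar>lb - l\<bar> \<le> \<bar>l\<bar> / 4"
  shows "0 < l * lb" "l * lb \<le> 4/3 * lb\<^sup>2"
proof -
  have "l*lb = l\<^sup>2 + l*(lb - l)" by (simp add: power2_eq_square algebra_simps)
  moreover have "\<bar>l*(lb - l)\<bar> \<le> \<bar>l\<bar> * (\<bar>l\<bar>/4)" unfolding abs_mult
    by (rule mult_left_mono) (use assms in auto)
  moreover have "\<bar>l\<bar> * \<bar>l\<bar> = l\<^sup>2" by (simp add: power2_eq_square abs_mult[symmetric])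
  moreover have "l\<^sup>2 > 0" using assms by simp
  ultimately show "0 < l * lb" using abs_ge_minus_self[of "l*(lb - l)"] by linarith
  have "(4*(lb-l) + l) * ((lb - l) + l) * l\<^sup>2 \<ge> 0"
  proof (cases "l > 0")
    case True
    have h: "-(l/4) \<le> lb - l" using assms(2) abs_of_pos[OF True] abs_ge_minus_self[of "lb-l"] by linarith
    have h1: "0 \<le> 4*(lb-l)+l" using h by (simp add: field_simps)
    have h2: "0 \<le> (lb-l)+l" using h True by linarith
    show ?thesis using h1 h2 by (intro mult_nonneg_nonneg) simp_all
  next
    case False
    then have "(4*(lb-l) + l) \<le> 0" "((lb - l) + l) \<le> 0" using assms by (auto simp: abs_le_iff)
    then show ?thesis by (simp add: mult_nonpos_nonpos)
  qed
  then have "(4*(lb-l) + l) * ((lb - l) + l) \<ge> 0" using \<open>l\<^sup>2 > 0\<close>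
    by (simp add: zero_le_mult_iff)
  then show "l * lb \<le> 4/3 * lb\<^sup>2" by (simp add: power2_eq_square algebra_simps)
qed

lemma hlem: fixes l lb g e :: real
  assumes l: "l \<noteq> 0" and d: "\<bar>lb - l\<bar> \<le> \<bar>l\<bar> * e / 4" and e: "0 < e" "e \<le> 1" and g: "g > 0"
  shows "\<bar>hfun g lb - hfun g l\<bar> \<le> e / 3 * \<bar>hfun g l\<bar>"
proof -
  have "\<bar>l\<bar> * e \<le> \<bar>l\<bar>" by (rule mult_left_le) (use e in auto)
  then have d4: "\<bar>lb - l\<bar> \<le> \<bar>l\<bar> / 4" using d by linarith
  note A = aux1[OF l d4]
  have pb: "lb\<^sup>2 + g > 0" "l\<^sup>2 + g > 0" using g by (auto intro: add_nonneg_pos)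
  have G: "\<bar>g - l*lb\<bar> \<le> 4/3 * (lb\<^sup>2 + g)" using A g zero_le_power2[of lb]
    unfolding abs_le_iff distrib_left by (intro conjI; linarith)
  have "\<bar>hfun g lb - hfun g l\<bar> = sqrt g * \<bar>lb - l\<bar> * \<bar>g - l*lb\<bar> / ((lb\<^sup>2 + g) * (l\<^sup>2 + g))"
    using pb g by (simp add: hdiff[OF l pb] abs_mult abs_divide)
  also have "\<dots> \<le> sqrt g * (\<bar>l\<bar> * e / 4) * (4/3 * (lb\<^sup>2 + g)) / ((lb\<^sup>2 + g) * (l\<^sup>2 + g))"
    using pb g d G e by (intro divide_right_mono mult_mono mult_left_mono) auto
  also have "\<dots> = e / 3 * (sqrt g * \<bar>l\<bar> / (l\<^sup>2 + g))"
  proof -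
    have n1: "lb\<^sup>2 + g \<noteq> 0" "l\<^sup>2 + g \<noteq> 0" using pb by auto
    have num: "sqrt g * (\<bar>l\<bar> * e / 4) * (4 / 3 * (lb\<^sup>2 + g)) = (lb\<^sup>2 + g) * (e / 3 * (sqrt g * \<bar>l\<bar>))"
      by (simp add: field_simps)
    show ?thesis unfolding num nonzero_mult_divide_mult_cancel_left[OF n1(1)] by simp
  qed
  also have "\<dots> = e / 3 * \<bar>hfun g l\<bar>" using pb g by (simp add: hfun_def abs_mult abs_divide)
  finally show ?thesis .
qed

lemma hnz: assumes "l \<noteq> 0" "g > 0" shows "hfun g l \<noteq> 0"
proof -
  have "l\<^sup>2 + g > 0" using assms by (intro add_nonneg_pos) auto
  then show ?thesis using assms unfolding hfun_def by simp
qed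

lemma norm_comp_le: fixes a b :: "complex^'n"
  assumes "\<And>i. norm (b$i - a$i) \<le> c * norm (a$i)" "c \<ge> 0"
  shows "norm (b - a) \<le> c * norm a"
  unfolding norm_vec_def using assms
  by (simp add: L2_set_right_distrib L2_set_mono)

lemma normalize_diff: fixes a b :: "'a::real_normed_vector"
  assumes "a \<noteq> 0" "b \<noteq> 0"
  shows "norm (b /\<^sub>R norm b - a /\<^sub>R norm a) \<le> 2 * norm (b - a) / norm a"
proof -
  have na: "norm a > 0" using assms by simp
  have nb: "norm b > 0" using assms by simp
  have eq: "b /\<^sub>R norm b - a /\<^sub>R norm a = (b - a) /\<^sub>R norm a + ((norm a - norm b) / (norm a * norm b)) *\<^sub>R b"
  proof -
    have "(norm a - norm b) / (norm a * norm b) = inverse (norm b) - inverse (norm a)"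
      using na nb by (simp add: field_simps)
    then show ?thesis by (simp add: scaleR_diff_left scaleR_diff_right divide_inverse_commute)
  qed
  have "norm (((norm a - norm b) / (norm a * norm b)) *\<^sub>R b) = \<bar>norm a - norm b\<bar> / norm a"
    using na nb by (simp add: abs_divide abs_mult)
  also have "\<dots> \<le> norm (b - a) / norm a"
    using na by (intro divide_right_mono) (auto simp: norm_triangle_ineq3 norm_minus_commute)
  finally have h2: "norm (((norm a - norm b) / (norm a * norm b)) *\<^sub>R b) \<le> norm (b - a) / norm a" .
  have "norm (b /\<^sub>R norm b - a /\<^sub>R norm a) \<le> norm ((b - a) /\<^sub>R norm a) + norm (((norm a - norm b) / (norm a * norm b)) *\<^sub>R b)"
    unfolding eq by (rule norm_triangle_ineq)
  also have "norm ((b - a) /\<^sub>R norm a) = norm (b - a) / norm a" using na by (simp only: norm_scaleR abs_inverse abs_norm_cancel) (simp add: divide_inverse_commute)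
  finally show ?thesis using h2 by simp
qed


lemma Vm_scaleR: "A *v (r *\<^sub>R x) = r *\<^sub>R (A *v (x::complex^'n))"
  by (simp add: vec_eq_iff matrix_vector_mult_def scaleR_sum_right)

lemma Vm_diff: "A *v (x - y) = A *v x - A *v (y::complex^'n)"
  by (simp add: matrix_vector_mult_diff_distrib)

definition Qm :: "('n \<Rightarrow> complex^'n) \<Rightarrow> ('n \<Rightarrow> complex) \<Rightarrow> complex^'n^'n" where
  "Qm v d = (Vm v ** Dg d) ** ctranspose (Vm v)"

lemma mm_elem: "(A ** B) $ i $ j = (\<Sum>k\<in>UNIV. A $ i $ k * B $ k $ j)"
  by (simp add: matrix_matrix_mult_def)

lemma VDg_elem: "(Vm v ** Dg d) $ a $ k = v k $ a * d k"
proof -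
  have "(Vm v ** Dg d) $ a $ k = (\<Sum>j\<in>UNIV. v j $ a * (if j = k then d j else 0))"
    by (simp add: mm_elem Vm_def Dg_def)
  also have "\<dots> = (\<Sum>j\<in>UNIV. if k = j then v j $ a * d j else 0)"
    by (rule sum.cong) auto
  also have "\<dots> = v k $ a * d k" by (simp only: sum.delta' finite UNIV_I if_True)
  finally show ?thesis .
qed

lemma Q_elem: "Qm v d $ a $ b = (\<Sum>k\<in>UNIV. v k $ a * d k * cnj (v k $ b))"
  unfolding Qm_def mm_elem[of "Vm v ** Dg d"] VDg_elem
  by (simp add: ctranspose_def Vm_def)

lemma Q_add: "Qm v d + Qm v e = Qm v (\<lambda>i. d i + e i)"
  by (simp add: vec_eq_iff Q_elem sum.distrib[symmetric] algebra_simps)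

lemma Q_scale: "Qm v (\<lambda>i. of_real r * d i) = r *\<^sub>R Qm v d"
proof -
  have c: "\<And>z::complex. r *\<^sub>R z = of_real r * z" by (rule scaleR_conv_of_real)
  show ?thesis unfolding vec_eq_iff vector_scaleR_component Q_elem c
    by (simp add: sum_distrib_left mult_ac)
qed

lemma Q_mult: assumes "orthonormal_family v" shows "Qm v d ** Qm v e = Qm v (\<lambda>i. d i * e i)"
proof -
  have "Qm v d ** Qm v e = Vm v ** (Dg d ** (ctranspose (Vm v) ** Vm v) ** Dg e) ** ctranspose (Vm v)"
    unfolding Qm_def by (simp only: matrix_mul_assoc)
  also have "\<dots> = Qm v (\<lambda>i. d i * e i)"
    unfolding Qm_def VV1[OF assms] matrix_mul_rid Dg_mult by (simp only: matrix_mul_assoc)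
  finally show ?thesis .
qed

lemma Q_one: assumes "orthonormal_family v" shows "Qm v (\<lambda>i. 1) = mat 1"
  unfolding Qm_def Dg_1 matrix_mul_rid VV2[OF assms] ..

lemma Cv: assumes "orthonormal_family v" shows "ctranspose (Vm v) *v (Vm v *v x) = x"
  by (simp only: matrix_vector_mul_assoc VV1[OF assms] matrix_vector_mul_lid)

lemma Q_vec: assumes "orthonormal_family v"
  shows "Qm v d *v (Vm v *v c) = Vm v *v (\<chi> i. d i * c $ i)"
  unfolding Qm_def by (simp only: matrix_vector_mul_assoc[symmetric] Cv[OF assms] Dg_vec)

lemma minv_eq: fixes A B :: "complex^'n^'n"
  assumes "A ** B = mat 1" "B ** A = mat 1" shows "matrix_inv A = B"
proof -
  have "\<exists>B'. A ** B' = mat 1 \<and> B' ** A = mat 1" using assms by blast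
  then have h: "A ** matrix_inv A = mat 1 \<and> matrix_inv A ** A = mat 1"
    unfolding matrix_inv_def by (rule someI_ex)
  have "matrix_inv A = matrix_inv A ** (A ** B)" using assms by simp
  also have "\<dots> = (matrix_inv A ** A) ** B" by (simp only: matrix_mul_assoc)
  also have "\<dots> = B" using h by simp
  finally show ?thesis .
qed



theorem mainTheorem3:
  fixes F :: "complex^'n^'n"
    and v :: "'n \<Rightarrow> complex^'n"
    and lam lbar :: "'n \<Rightarrow> real"
    and beta :: "'n \<Rightarrow> complex"
    and y :: "complex^'n"
    and s \<kappa> \<gamma> \<epsilon> :: real
  assumes invF: "invertible F"
    and herm: "ctranspose F = F"
    and onb: "orthonormal_family v"
    and decomp: "F = (\<Sum>i\<in>UNIV. lam i *\<^sub>R outer (v i) (v i))"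
    and s_def: "s = Max (range (\<lambda>i. \<bar>lam i\<bar>))"
    and kappa_def: "\<kappa> = s / Min (range (\<lambda>i. \<bar>lam i\<bar>))"
    and gam: "\<gamma> > 0"
    and eps: "0 < \<epsilon>" "\<epsilon> \<le> 1"
    and y_def: "y = (\<Sum>i\<in>UNIV. beta i *s v i)"
    and y_unit: "norm y = 1"
    and est: "\<And>i. \<bar>lbar i - lam i\<bar> \<le> s / (4 * \<kappa>) * \<epsilon>"
  shows "(\<Sum>i\<in>UNIV. (beta i * of_real (hfun \<gamma> (lbar i))) *s v i) \<noteq> 0
       \<and> (\<Sum>i\<in>UNIV. (beta i * of_real (hfun \<gamma> (lam i))) *s v i) \<noteq> 0
       \<and> (let w = (\<Sum>i\<in>UNIV. (beta i * of_real (hfun \<gamma> (lbar i))) *s v i) /\<^sub>R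
                   norm (\<Sum>i\<in>UNIV. (beta i * of_real (hfun \<gamma> (lbar i))) *s v i);
              wstar = (\<Sum>i\<in>UNIV. (beta i * of_real (hfun \<gamma> (lam i))) *s v i) /\<^sub>R
                   norm (\<Sum>i\<in>UNIV. (beta i * of_real (hfun \<gamma> (lam i))) *s v i);
              u = matrix_inv (ctranspose F ** F + of_real \<gamma> *\<^sub>R mat 1) *v (ctranspose F *v y)
          in u \<noteq> 0 \<and> wstar = u /\<^sub>R norm u \<and> norm (w - wstar) \<le> \<epsilon>)"
proof -
  define V where "V = Vm v"
  have Vinj: "\<And>x. V *v x = 0 \<Longrightarrow> x = 0"
    by (metis Cv[OF onb] V_def matrix_vector_mult_0_right)
  have FQ: "F = Qm v (\<lambda>i. of_real (lam i))"
  proof -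
    have c: "\<And>r (z::complex). r *\<^sub>R z = of_real r * z" by (rule scaleR_conv_of_real)
    show ?thesis unfolding decomp vec_eq_iff Q_elem
      by (simp add: outer_def c mult_ac)
  qed
  have lam_nz: "lam i \<noteq> 0" for i
  proof
    assume l0: "lam i = 0"
    define e where "e = (\<chi> j. if j = i then (1::complex) else 0)"
    have "F *v (V *v e) = V *v (\<chi> j. of_real (lam j) * e $ j)"
      unfolding FQ V_def by (rule Q_vec[OF onb])
    also have "(\<chi> j. of_real (lam j) * e $ j) = (0::complex^'n)"
      using l0 by (simp add: vec_eq_iff e_def)
    finally have "F *v (V *v e) = 0" by simp
    then have "V *v e = 0" using inj_matrix_vector_mult[OF invF]
      by (metis injD matrix_vector_mult_0_right)
    then have "e = 0" by (rule Vinj)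
    then have "e $ i = 0" by simp
    then show False by (simp add: e_def)
  qed
  define m where "m = Min (range (\<lambda>i. \<bar>lam i\<bar>))"
  have m_le: "m \<le> \<bar>lam i\<bar>" for i unfolding m_def by (rule Min_le) auto
  have "m \<in> range (\<lambda>i. \<bar>lam i\<bar>)" unfolding m_def by (rule Min_in) auto
  then have m_pos: "m > 0" using lam_nz by auto
  have s_ge: "\<bar>lam i\<bar> \<le> s" for i unfolding s_def by (rule Max_ge) auto
  have s_pos: "s > 0" using s_ge[of undefined] m_le[of undefined] m_pos by linarith
  have key: "s / (4 * \<kappa>) = m / 4"
    unfolding kappa_def m_def[symmetric] using s_pos m_pos by (simp add: field_simps)
  have est2: "\<bar>lbar i - lam i\<bar> \<le> \<bar>lam i\<bar> * \<epsilon> / 4" for i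
  proof -
    have "m * \<epsilon> \<le> \<bar>lam i\<bar> * \<epsilon>" using m_le[of i] eps by (intro mult_right_mono) auto
    then show ?thesis using est[of i] unfolding key by simp
  qed
  have hh: "\<bar>hfun \<gamma> (lbar i) - hfun \<gamma> (lam i)\<bar> \<le> \<epsilon> / 3 * \<bar>hfun \<gamma> (lam i)\<bar>" for i
    by (rule hlem[OF lam_nz est2 eps gam])
  have lbar_nz: "lbar i \<noteq> 0" for i
  proof
    assume "lbar i = 0"
    then have "\<bar>lam i\<bar> \<le> \<bar>lam i\<bar> * \<epsilon> / 4" using est2[of i] by simp
    moreover have "\<bar>lam i\<bar> * \<epsilon> \<le> \<bar>lam i\<bar>" using eps by (intro mult_left_le) auto
    moreover have "\<bar>lam i\<bar> > 0" using lam_nz[of i] by simp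
    ultimately show False by linarith
  qed
  define a where "a = (\<chi> i. beta i * of_real (hfun \<gamma> (lam i)))"
  define b where "b = (\<chi> i. beta i * of_real (hfun \<gamma> (lbar i)))"
  define bt where "bt = (\<chi> i. beta i)"
  have Sa: "(\<Sum>i\<in>UNIV. (beta i * of_real (hfun \<gamma> (lam i))) *s v i) = V *v a"
    unfolding a_def V_def by (rule sum_Vm)
  have Sb: "(\<Sum>i\<in>UNIV. (beta i * of_real (hfun \<gamma> (lbar i))) *s v i) = V *v b"
    unfolding b_def V_def by (rule sum_Vm)
  have yV: "y = V *v bt" unfolding y_def bt_def V_def by (rule sum_Vm)
  have "bt \<noteq> 0" using y_unit yV by auto
  then obtain i0 where i0: "beta i0 \<noteq> 0" by (auto simp: vec_eq_iff bt_def)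
  have a_nz: "a \<noteq> 0"
  proof
    assume "a = 0"
    then have "a $ i0 = 0" by simp
    then show False using i0 hnz[OF lam_nz gam] by (simp add: a_def)
  qed
  have b_nz: "b \<noteq> 0"
  proof
    assume "b = 0"
    then have "b $ i0 = 0" by simp
    then show False using i0 hnz[OF lbar_nz gam] by (simp add: b_def)
  qed
  have Va_nz: "V *v a \<noteq> 0" using a_nz Vinj by blast
  have Vb_nz: "V *v b \<noteq> 0" using b_nz Vinj by blast
  have pos: "lam i ^ 2 + \<gamma> > 0" for i using gam by (intro add_nonneg_pos) auto
  define M where "M = ctranspose F ** F + of_real \<gamma> *\<^sub>R mat 1"
  define Mi where "Mi = Qm v (\<lambda>i. of_real (1 / (lam i ^ 2 + \<gamma>)))"
  have M: "M = Qm v (\<lambda>i. of_real (lam i ^ 2 + \<gamma>))"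
  proof -
    have "ctranspose F ** F = Qm v (\<lambda>i. of_real (lam i) * of_real (lam i))"
      unfolding herm by (subst (1 2) FQ) (rule Q_mult[OF onb])
    moreover have "of_real \<gamma> *\<^sub>R (mat 1 :: complex^'n^'n) = Qm v (\<lambda>i. of_real \<gamma> * 1)"
      by (simp only: Q_scale Q_one[OF onb] of_real_eq_id id_def)
    ultimately have "M = Qm v (\<lambda>i. of_real (lam i) * of_real (lam i) + of_real \<gamma> * 1)"
      unfolding M_def by (simp add: Q_add)
    also have "(\<lambda>i. of_real (lam i) * of_real (lam i) + of_real \<gamma> * 1) = (\<lambda>i. of_real (lam i ^ 2 + \<gamma>) :: complex)"
      by (simp add: power2_eq_square)
    finally show ?thesis .
  qed
  have cancel: "(\<lambda>i. of_real (lam i ^ 2 + \<gamma>) * of_real (1 / (lam i ^ 2 + \<gamma>)) :: complex) = (\<lambda>i. 1)"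
    "(\<lambda>i. of_real (1 / (lam i ^ 2 + \<gamma>)) * of_real (lam i ^ 2 + \<gamma>) :: complex) = (\<lambda>i. 1)"
  proof -
    have r: "(lam i ^ 2 + \<gamma>) * (1 / (lam i ^ 2 + \<gamma>)) = 1" "(1 / (lam i ^ 2 + \<gamma>)) * (lam i ^ 2 + \<gamma>) = 1" for i
      using pos[of i] by simp_all
    show "(\<lambda>i. of_real (lam i ^ 2 + \<gamma>) * of_real (1 / (lam i ^ 2 + \<gamma>)) :: complex) = (\<lambda>i. 1)"
      by (intro ext) (metis r(1) of_real_1 of_real_mult)
    show "(\<lambda>i. of_real (1 / (lam i ^ 2 + \<gamma>)) * of_real (lam i ^ 2 + \<gamma>) :: complex) = (\<lambda>i. 1)"
      by (intro ext) (metis r(2) of_real_1 of_real_mult)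
  qed
  have "M ** Mi = mat 1" unfolding M Mi_def Q_mult[OF onb] cancel Q_one[OF onb] ..
  moreover have "Mi ** M = mat 1" unfolding M Mi_def Q_mult[OF onb] cancel Q_one[OF onb] ..
  ultimately have Minv: "matrix_inv M = Mi" by (rule minv_eq)
  define u where "u = matrix_inv M *v (ctranspose F *v y)"
  have u: "u = V *v (\<chi> i. of_real (1 / (lam i ^ 2 + \<gamma>)) * (of_real (lam i) * beta i))"
    unfolding u_def Minv Mi_def herm yV V_def
    by (subst FQ, simp only: Q_vec[OF onb] vec_lambda_beta bt_def)
  have au: "V *v a = sqrt \<gamma> *\<^sub>R u"
  proof -
    have "a = sqrt \<gamma> *\<^sub>R (\<chi> i. of_real (1 / (lam i ^ 2 + \<gamma>)) * (of_real (lam i) * beta i))"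
      unfolding a_def hfun_def
      by (simp add: vec_eq_iff scaleR_conv_of_real[where 'a=complex] mult_ac)
    then show ?thesis unfolding u by (simp only: Vm_scaleR)
  qed
  have sg: "sqrt \<gamma> > 0" using gam by simp
  have u_nz: "u \<noteq> 0" using Va_nz au by auto
  have wstar: "(V *v a) /\<^sub>R norm (V *v a) = u /\<^sub>R norm u"
    unfolding au using sg by simp
  have nV: "norm (V *v x) = norm x" for x unfolding V_def by (rule norm_Vm[OF onb])
  have diff: "(V *v b) /\<^sub>R norm (V *v b) - (V *v a) /\<^sub>R norm (V *v a) = V *v (b /\<^sub>R norm b - a /\<^sub>R norm a)"
    unfolding nV Vm_diff Vm_scaleR ..
  have ba: "norm (b - a) \<le> \<epsilon> / 3 * norm a"
  proof (rule norm_comp_le)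
    fix i
    have "norm (b $ i - a $ i) = norm (beta i) * \<bar>hfun \<gamma> (lbar i) - hfun \<gamma> (lam i)\<bar>"
      unfolding a_def b_def by (simp add: right_diff_distrib[symmetric] norm_mult flip: of_real_diff)
    also have "\<dots> \<le> norm (beta i) * (\<epsilon> / 3 * \<bar>hfun \<gamma> (lam i)\<bar>)"
      by (rule mult_left_mono[OF hh]) simp
    also have "\<dots> = \<epsilon> / 3 * norm (a $ i)" unfolding a_def by (simp add: norm_mult)
    finally show "norm (b $ i - a $ i) \<le> \<epsilon> / 3 * norm (a $ i)" .
  next
    show "0 \<le> \<epsilon> / 3" using eps by simp
  qed
  have na: "norm a > 0" using a_nz by simp
  have "norm (b /\<^sub>R norm b - a /\<^sub>R norm a) \<le> 2 * norm (b - a) / norm a"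
    by (rule normalize_diff[OF a_nz b_nz])
  also have "\<dots> \<le> 2 * (\<epsilon> / 3 * norm a) / norm a"
    using ba na by (intro divide_right_mono) auto
  also have "\<dots> = 2 * \<epsilon> / 3" using na by simp
  also have "\<dots> \<le> \<epsilon>" using eps by simp
  finally have fin: "norm (b /\<^sub>R norm b - a /\<^sub>R norm a) \<le> \<epsilon>" .
  show ?thesis
    unfolding Let_def Sa Sb M_def[symmetric] u_def[symmetric]
    using Va_nz Vb_nz u_nz wstar fin diff nV by simp
qed


end
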